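(* Let $R$ be a commutative unital ring, $G$ a group, $(\mathcal B_1,\Phi_1)\subseteq(\mathcal B_2,\Phi_2)$ a partial subaction of $G$ on generalized Boolean algebras with $\Phi_2=(\{\mathcal I_{2,t}\},\{\phi_{2,t}\})$, and $A_2=\mathrm{Lc}(R,\mathcal B_2)\rtimes_{\Phi_2}G$. Suppose $\mathcal B_1$ is an ideal of $\mathcal B_2$ and that for every $U\in\mathcal B_2$ there exist $g_1,\dots,g_n\in G$ and $V_i\in\mathcal I_{2,g_i^{-1}}\cap\mathcal B_1$ with $U\le\bigcup_{i=1}^n\phi_{2,g_i}(V_i)$. Then for every $U\in\mathcal B_2$ there exist an index set $I$, elements $U_i\in\mathcal B_1$ ($i\in I$) and a surjective left $A_2$-module homomorphism $\bigoplus_{i\in I}A_2(U_i\delta_e)\to A_2(U\delta_e)$.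
   Context: A generalized Boolean algebra is a distributive relatively complemented lattice with least element $0$; an ideal is a subset closed under finite joins and under meets with arbitrary elements. A partial action $\Phi$ of $G$ on $\mathcal B$: ideals $\mathcal I_t$ and isomorphisms $\phi_t:\mathcal I_{t^{-1}}\to\mathcal I_t$ with $\mathcal I_e=\mathcal B$, $\phi_e=\mathrm{id}$, $\phi_s(\mathcal I_{s^{-1}}\cap\mathcal I_t)=\mathcal I_s\cap\mathcal I_{st}$, $\phi_s\phi_t=\phi_{st}$ where defined. A partial subaction: $\mathcal B_1\subseteq\mathcal B_2$ sub generalized Boolean algebra, $\mathcal I_{1,t}\subseteq\mathcal I_{2,t}$, $\phi_{2,t}$ restricting to $\phi_{1,t}$. $\mathrm{Lc}(R,\mathcal B)$ is the algebra of locally constant compactly supported $R$-valued functions on the Stone space of $\mathcal B$, spanned by idempotents $1_U$; $\mathrm{Lc}(R,\mathcal B)\rtimes_\Phi G=\bigoplus_g\mathrm{Lc}(R,\mathcal I_g)\delta_g$ with $U\delta_g:=1_U\delta_g$ and $(U\delta_g)(V\delta_h)=\phi_g(\phi_{g^{-1}}(U)\cap V)\delta_{gh}$. *)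

theory Defs
  imports Main "HOL-Library.Function_Algebras"
begin

text \<open>Generalized Boolean algebras are represented as subsets B of a type 'b carrying a
distributive lattice structure with least element bot; B must contain bot, be closed under
binary joins and meets, and be relatively complemented inside B.\<close>

definition gba :: "'b::{distrib_lattice,order_bot} set \<Rightarrow> bool" where
  "gba B \<longleftrightarrow> bot \<in> B \<and> (\<forall>a\<in>B. \<forall>b\<in>B. sup a b \<in> B \<and> inf a b \<in> B) \<and>
     (\<forall>a\<in>B. \<forall>b\<in>B. a \<le> b \<longrightarrow> (\<exists>c\<in>B. inf a c = bot \<and> sup a c = b))"

definition gba_ideal :: "'b::{distrib_lattice,order_bot} set \<Rightarrow> 'b set \<Rightarrow> bool" where
  "gba_ideal B I \<longleftrightarrow> I \<subseteq> B \<and> bot \<in> I \<and> (\<forall>a\<in>I. \<forall>b\<in>I. sup a b \<in> I) \<and>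
     (\<forall>a\<in>I. \<forall>b\<in>B. inf a b \<in> I)"

definition gba_iso :: "'b::{distrib_lattice,order_bot} set \<Rightarrow> 'b set \<Rightarrow> ('b \<Rightarrow> 'b) \<Rightarrow> bool" where
  "gba_iso I J f \<longleftrightarrow> bij_betw f I J \<and>
     (\<forall>a\<in>I. \<forall>b\<in>I. f (sup a b) = sup (f a) (f b) \<and> f (inf a b) = inf (f a) (f b))"

text \<open>Partial action of a group (written additively: e = 0, st = s + t, inverse = -t).\<close>
definition partial_action ::
  "'b::{distrib_lattice,order_bot} set \<Rightarrow> ('g::group_add \<Rightarrow> 'b set) \<Rightarrow> ('g \<Rightarrow> 'b \<Rightarrow> 'b) \<Rightarrow> bool" where
  "partial_action B I \<phi> \<longleftrightarrow> gba B \<and> (\<forall>t. gba_ideal B (I t)) \<and>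
     (\<forall>t. gba_iso (I (- t)) (I t) (\<phi> t)) \<and>
     I 0 = B \<and> (\<forall>x\<in>B. \<phi> 0 x = x) \<and>
     (\<forall>s t. \<phi> s ` (I (- s) \<inter> I t) = I s \<inter> I (s + t)) \<and>
     (\<forall>s t. \<forall>x\<in>I (- t). \<phi> t x \<in> I (- s) \<longrightarrow> \<phi> s (\<phi> t x) = \<phi> (s + t) x)"

definition partial_subaction ::
  "'b::{distrib_lattice,order_bot} set \<Rightarrow> ('g::group_add \<Rightarrow> 'b set) \<Rightarrow> ('g \<Rightarrow> 'b \<Rightarrow> 'b) \<Rightarrow>
   'b set \<Rightarrow> ('g \<Rightarrow> 'b set) \<Rightarrow> ('g \<Rightarrow> 'b \<Rightarrow> 'b) \<Rightarrow> bool" where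
  "partial_subaction B1 I1 \<phi>1 B2 I2 \<phi>2 \<longleftrightarrow>
     partial_action B1 I1 \<phi>1 \<and> partial_action B2 I2 \<phi>2 \<and> B1 \<subseteq> B2 \<and>
     (\<forall>t. I1 t \<subseteq> I2 t) \<and> (\<forall>t. \<forall>x\<in>I1 (- t). \<phi>2 t x = \<phi>1 t x)"

text \<open>Stone space of B: prime filters of B.\<close>
definition prime_filter :: "'b::{distrib_lattice,order_bot} set \<Rightarrow> 'b set \<Rightarrow> bool" where
  "prime_filter B p \<longleftrightarrow> p \<subseteq> B \<and> p \<noteq> {} \<and> bot \<notin> p \<and>
     (\<forall>a\<in>p. \<forall>b\<in>B. a \<le> b \<longrightarrow> b \<in> p) \<and> (\<forall>a\<in>p. \<forall>b\<in>p. inf a b \<in> p) \<and>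
     (\<forall>a\<in>B. \<forall>b\<in>B. sup a b \<in> p \<longrightarrow> a \<in> p \<or> b \<in> p)"

text \<open>The idempotent 1_U: indicator of the compact open set of prime filters containing U.\<close>
definition ind :: "'b::{distrib_lattice,order_bot} set \<Rightarrow> 'b \<Rightarrow> 'b set \<Rightarrow> 'r::comm_ring_1" where
  "ind B U = (\<lambda>p. if prime_filter B p \<and> U \<in> p then 1 else 0)"

text \<open>Lc(R, S) for S a sub generalized Boolean algebra (or ideal) of B, realised inside the
functions on the Stone space of B: the R-span of the idempotents 1_U, U in S.\<close>
definition Lc :: "'b::{distrib_lattice,order_bot} set \<Rightarrow> 'b set \<Rightarrow> ('b set \<Rightarrow> 'r::comm_ring_1) set" where
  "Lc B S = {f. \<exists>F c. finite F \<and> F \<subseteq> S \<and> f = (\<lambda>p. \<Sum>U\<in>F. c U * ind B U p)}"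

text \<open>The induced partial action on functions: alpha_g f = f o (dual of phi_(g^-1)),
so that alpha_g (1_V) = 1_(phi_g V) for V in I_(g^-1).\<close>
definition pull :: "'b::{distrib_lattice,order_bot} set \<Rightarrow> ('g::group_add \<Rightarrow> 'b set) \<Rightarrow> ('g \<Rightarrow> 'b \<Rightarrow> 'b)
    \<Rightarrow> 'g \<Rightarrow> 'b set \<Rightarrow> 'b set" where
  "pull B I \<phi> g p = {b\<in>B. \<exists>a\<in>p \<inter> I g. \<phi> (- g) a \<le> b}"

definition alpha :: "'b::{distrib_lattice,order_bot} set \<Rightarrow> ('g::group_add \<Rightarrow> 'b set) \<Rightarrow> ('g \<Rightarrow> 'b \<Rightarrow> 'b)
    \<Rightarrow> 'g \<Rightarrow> ('b set \<Rightarrow> 'r::comm_ring_1) \<Rightarrow> ('b set \<Rightarrow> 'r)" where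
  "alpha B I \<phi> g f = (\<lambda>p. if prime_filter B p \<and> p \<inter> I g \<noteq> {} then f (pull B I \<phi> g p) else 0)"

text \<open>The skew group ring Lc(R,B) \<rtimes> G = direct sum of Lc(R, I_g) delta_g,
elements represented as finitely supported functions g \<mapsto> a_g.\<close>
definition skew :: "'b::{distrib_lattice,order_bot} set \<Rightarrow> ('g::group_add \<Rightarrow> 'b set) \<Rightarrow> ('g \<Rightarrow> 'b \<Rightarrow> 'b)
    \<Rightarrow> ('g \<Rightarrow> 'b set \<Rightarrow> 'r::comm_ring_1) set" where
  "skew B I \<phi> = {a. finite {g. a g \<noteq> 0} \<and> (\<forall>g. a g \<in> Lc B (I g))}"

text \<open>(a_g delta_g)(b_h delta_h) = alpha_g(alpha_(g^-1)(a_g) b_h) delta_(gh), extended bilinearly.\<close>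
definition skew_mult :: "'b::{distrib_lattice,order_bot} set \<Rightarrow> ('g::group_add \<Rightarrow> 'b set) \<Rightarrow> ('g \<Rightarrow> 'b \<Rightarrow> 'b)
    \<Rightarrow> ('g \<Rightarrow> 'b set \<Rightarrow> 'r::comm_ring_1) \<Rightarrow> ('g \<Rightarrow> 'b set \<Rightarrow> 'r) \<Rightarrow> ('g \<Rightarrow> 'b set \<Rightarrow> 'r)" where
  "skew_mult B I \<phi> a b = (\<lambda>k. \<Sum>g\<in>{g. a g \<noteq> 0}.
      alpha B I \<phi> g (\<lambda>p. alpha B I \<phi> (- g) (a g) p * b (- g + k) p))"

definition delta :: "'b::{distrib_lattice,order_bot} set \<Rightarrow> 'b \<Rightarrow> 'g \<Rightarrow> ('g \<Rightarrow> 'b set \<Rightarrow> 'r::comm_ring_1)" where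
  "delta B U g = (\<lambda>k. if k = g then ind B U else 0)"

definition left_ideal :: "'b::{distrib_lattice,order_bot} set \<Rightarrow> ('g::group_add \<Rightarrow> 'b set) \<Rightarrow> ('g \<Rightarrow> 'b \<Rightarrow> 'b)
    \<Rightarrow> ('g \<Rightarrow> 'b set \<Rightarrow> 'r::comm_ring_1) \<Rightarrow> ('g \<Rightarrow> 'b set \<Rightarrow> 'r) set" where
  "left_ideal B I \<phi> x = {skew_mult B I \<phi> a x | a. a \<in> skew B I \<phi>}"

definition dsum :: "'i set \<Rightarrow> ('i \<Rightarrow> 'm::zero set) \<Rightarrow> ('i \<Rightarrow> 'm) set" where
  "dsum J M = {x. finite {i. x i \<noteq> 0} \<and> (\<forall>i\<in>J. x i \<in> M i) \<and> (\<forall>i. i \<notin> J \<longrightarrow> x i = 0)}"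

definition skew_module_hom :: "'b::{distrib_lattice,order_bot} set \<Rightarrow> ('g::group_add \<Rightarrow> 'b set) \<Rightarrow> ('g \<Rightarrow> 'b \<Rightarrow> 'b)
    \<Rightarrow> ('i \<Rightarrow> ('g \<Rightarrow> 'b set \<Rightarrow> 'r::comm_ring_1)) set \<Rightarrow> ('g \<Rightarrow> 'b set \<Rightarrow> 'r) set
    \<Rightarrow> (('i \<Rightarrow> ('g \<Rightarrow> 'b set \<Rightarrow> 'r)) \<Rightarrow> ('g \<Rightarrow> 'b set \<Rightarrow> 'r)) \<Rightarrow> bool" where
  "skew_module_hom B I \<phi> D N f \<longleftrightarrow> (\<forall>x\<in>D. f x \<in> N) \<and>
     (\<forall>x\<in>D. \<forall>y\<in>D. f (x + y) = f x + f y) \<and>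
     (\<forall>a\<in>skew B I \<phi>. \<forall>x\<in>D. f (\<lambda>i. skew_mult B I \<phi> a (x i)) = skew_mult B I \<phi> a (f x))"

definition join_images :: "('g \<Rightarrow> 'b \<Rightarrow> 'b::{distrib_lattice,order_bot}) \<Rightarrow> ('g \<times> 'b) list \<Rightarrow> 'b" where
  "join_images \<phi> ps = foldr (\<lambda>(g, V) acc. sup (\<phi> g V) acc) ps bot"

end

theory Submission
  imports Defs
begin
lemma pa_facts:
  assumes "partial_action B I \<phi>"
  shows pa_gba: "gba B" and pa_ideal: "gba_ideal B (I t)" and pa_iso: "gba_iso (I (- t)) (I t) (\<phi> t)"
    and pa_I0: "I 0 = B" and pa_phi0: "x \<in> B \<Longrightarrow> \<phi> 0 x = x"
    and pa_img: "\<phi> s ` (I (- s) \<inter> I t) = I s \<inter> I (s + t)"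
    and pa_comp: "x \<in> I (- t) \<Longrightarrow> \<phi> t x \<in> I (- s) \<Longrightarrow> \<phi> s (\<phi> t x) = \<phi> (s + t) x"
  using assms unfolding partial_action_def by auto

lemma I_sub: "partial_action B I \<phi> \<Longrightarrow> x \<in> I t \<Longrightarrow> x \<in> B"
  using pa_ideal unfolding gba_ideal_def by blast
lemma I_bot: "partial_action B I \<phi> \<Longrightarrow> bot \<in> I t"
  using pa_ideal unfolding gba_ideal_def by blast
lemma I_inf: "partial_action B I \<phi> \<Longrightarrow> a \<in> I t \<Longrightarrow> b \<in> B \<Longrightarrow> inf a b \<in> I t"
  using pa_ideal unfolding gba_ideal_def by blast
lemma I_inf2: "partial_action B I \<phi> \<Longrightarrow> b \<in> I t \<Longrightarrow> a \<in> B \<Longrightarrow> inf a b \<in> I t"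
  using I_inf[of B I \<phi> b t a] by (simp add: inf_commute)
lemma B_inf: "partial_action B I \<phi> \<Longrightarrow> a \<in> B \<Longrightarrow> b \<in> B \<Longrightarrow> inf a b \<in> B"
  using pa_gba unfolding gba_def by blast
lemma B_sup: "partial_action B I \<phi> \<Longrightarrow> a \<in> B \<Longrightarrow> b \<in> B \<Longrightarrow> sup a b \<in> B"
  using pa_gba unfolding gba_def by blast
lemma phi_mem: "partial_action B I \<phi> \<Longrightarrow> x \<in> I (- t) \<Longrightarrow> \<phi> t x \<in> I t"
  using pa_iso[of B I \<phi> t] unfolding gba_iso_def by (meson bij_betw_apply)
lemma phi_inf: "partial_action B I \<phi> \<Longrightarrow> x \<in> I (- t) \<Longrightarrow> y \<in> I (- t) \<Longrightarrow> \<phi> t (inf x y) = inf (\<phi> t x) (\<phi> t y)"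
  using pa_iso[of B I \<phi> t] unfolding gba_iso_def by blast
lemma phi_sup: "partial_action B I \<phi> \<Longrightarrow> x \<in> I (- t) \<Longrightarrow> y \<in> I (- t) \<Longrightarrow> \<phi> t (sup x y) = sup (\<phi> t x) (\<phi> t y)"
  using pa_iso[of B I \<phi> t] unfolding gba_iso_def by blast
lemma phi_mono: "partial_action B I \<phi> \<Longrightarrow> x \<in> I (- t) \<Longrightarrow> y \<in> I (- t) \<Longrightarrow> x \<le> y \<Longrightarrow> \<phi> t x \<le> \<phi> t y"
  by (metis inf.absorb_iff1 phi_inf)
lemma phi_inv:
  fixes B :: "'b::{distrib_lattice,order_bot} set" and I :: "'g::group_add \<Rightarrow> 'b set"
  assumes "partial_action B I \<phi>" "a \<in> I t" shows "\<phi> t (\<phi> (- t) a) = a"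
proof -
  have 1: "\<phi> (- t) a \<in> I (- t)" using phi_mem[where t="- t" and x=a] assms by simp
  have "\<phi> t (\<phi> (- t) a) = \<phi> (t + - t) a"
    using pa_comp[OF assms(1), where x=a and t="- t" and s=t] assms 1 by simp
  also have "\<dots> = a" using pa_phi0[OF assms(1)] I_sub[OF assms] by simp
  finally show ?thesis .
qed
lemma phi_inv': "partial_action B I \<phi> \<Longrightarrow> a \<in> I (- t) \<Longrightarrow> \<phi> (- t) (\<phi> t a) = a"
  using phi_inv[where t="- t"] by simp
lemma phi_mem': "partial_action B I \<phi> \<Longrightarrow> x \<in> I t \<Longrightarrow> \<phi> (- t) x \<in> I (- t)"
  using phi_mem[where t="- t"] by simp
lemma phi_bot: assumes "partial_action B I \<phi>" shows "\<phi> t bot = bot"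
proof -
  have c: "\<phi> (- t) bot \<in> I (- t)" using phi_mem'[OF assms I_bot[OF assms]] .
  have "\<phi> t (\<phi> (- t) bot) = bot" using phi_inv[OF assms I_bot[OF assms]] .
  moreover have "\<phi> t bot = \<phi> t (inf bot (\<phi> (- t) bot))" by (simp add: inf.absorb1)
  ultimately show ?thesis using phi_inf[OF assms I_bot[OF assms] c] by (simp add: inf.absorb2)
qed

lemma pf_sub: "prime_filter B p \<Longrightarrow> a \<in> p \<Longrightarrow> a \<in> B"
  unfolding prime_filter_def by auto
lemma pf_up: "prime_filter B p \<Longrightarrow> a \<in> p \<Longrightarrow> b \<in> B \<Longrightarrow> a \<le> b \<Longrightarrow> b \<in> p"
  unfolding prime_filter_def by blast
lemma pf_inf: "prime_filter B p \<Longrightarrow> a \<in> p \<Longrightarrow> b \<in> p \<Longrightarrow> inf a b \<in> p"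
  unfolding prime_filter_def by blast
lemma pf_bot: "prime_filter B p \<Longrightarrow> bot \<notin> p"
  unfolding prime_filter_def by blast
lemma pf_prime: "prime_filter B p \<Longrightarrow> a \<in> B \<Longrightarrow> b \<in> B \<Longrightarrow> sup a b \<in> p \<Longrightarrow> a \<in> p \<or> b \<in> p"
  unfolding prime_filter_def by blast

lemma pull_mem: "b \<in> pull B I \<phi> g p \<longleftrightarrow> b \<in> B \<and> (\<exists>a\<in>p \<inter> I g. \<phi> (- g) a \<le> b)"
  by (simp add: pull_def)

lemma L2: assumes pa: "partial_action B I \<phi>" and pf: "prime_filter B p" and V: "V \<in> I (- g)"
  shows "V \<in> pull B I \<phi> g p \<longleftrightarrow> \<phi> g V \<in> p"
proof
  assume "V \<in> pull B I \<phi> g p"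
  then obtain a where a: "a \<in> p" "a \<in> I g" "\<phi> (- g) a \<le> V" by (auto simp: pull_mem)
  have "\<phi> g (\<phi> (- g) a) \<le> \<phi> g V" by (rule phi_mono[OF pa phi_mem'[OF pa a(2)] V a(3)])
  then have "a \<le> \<phi> g V" using phi_inv[OF pa a(2)] by simp
  then show "\<phi> g V \<in> p" using pf_up[OF pf a(1)] I_sub[OF pa phi_mem[OF pa V]] by blast
next
  assume h: "\<phi> g V \<in> p"
  have "\<phi> (- g) (\<phi> g V) = V" using phi_inv'[OF pa V] .
  then show "V \<in> pull B I \<phi> g p" using h phi_mem[OF pa V] I_sub[OF pa V]
    by (auto simp: pull_mem intro!: bexI[of _ "\<phi> g V"])
qed

lemma pull_pf:
  fixes B :: "'b::{distrib_lattice,order_bot} set" and I :: "'g::group_add \<Rightarrow> 'b set"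
  assumes pa: "partial_action B I \<phi>" and pf: "prime_filter B p" and a: "a \<in> p" "a \<in> I g"
  shows "prime_filter B (pull B I \<phi> g p)" "\<phi> (- g) a \<in> pull B I \<phi> g p"
proof -
  let ?q = "pull B I \<phi> g p"
  have ea: "\<phi> (- g) a \<in> I (- g)" using phi_mem'[OF pa a(2)] .
  show aq: "\<phi> (- g) a \<in> ?q" using a ea I_sub[OF pa ea] by (auto simp: pull_mem)
  have "?q \<subseteq> B" by (auto simp: pull_mem)
  moreover have "?q \<noteq> {}" using aq by blast
  moreover have "bot \<notin> ?q"
  proof
    assume "bot \<in> ?q"
    then obtain a' where a': "a' \<in> p" "a' \<in> I g" "\<phi> (- g) a' \<le> bot" by (auto simp: pull_mem)
    then have "\<phi> (- g) a' = bot" by (simp add: order.antisym)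
    then have "a' = \<phi> g bot" using phi_inv[OF pa a'(2)] by simp
    then have "a' = bot" using phi_bot[OF pa] by simp
    then show False using a'(1) pf_bot[OF pf] by simp
  qed
  moreover have "\<forall>x\<in>?q. \<forall>y\<in>B. x \<le> y \<longrightarrow> y \<in> ?q"
  proof (intro ballI impI)
    fix x y assume xy: "x \<in> ?q" "y \<in> B" "x \<le> y"
    then obtain a0 where "a0 \<in> p" "a0 \<in> I g" "\<phi> (- g) a0 \<le> x" by (auto simp: pull_mem)
    then show "y \<in> ?q" unfolding pull_mem using xy by (intro conjI bexI[of _ a0]) (auto intro: order.trans)
  qed
  moreover have "\<forall>x\<in>?q. \<forall>y\<in>?q. inf x y \<in> ?q"
  proof (intro ballI)
    fix x y assume "x \<in> ?q" "y \<in> ?q"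
    then obtain a1 a2 where h: "x \<in> B" "y \<in> B" "a1 \<in> p" "a1 \<in> I g" "\<phi> (- g) a1 \<le> x"
       "a2 \<in> p" "a2 \<in> I g" "\<phi> (- g) a2 \<le> y" by (auto simp: pull_mem)
    have "inf a1 a2 \<in> p" using pf_inf[OF pf h(3,6)] .
    moreover have "inf a1 a2 \<in> I g" using I_inf[OF pa h(4) I_sub[OF pa h(7)]] .
    moreover have "\<phi> (- g) (inf a1 a2) = inf (\<phi> (- g) a1) (\<phi> (- g) a2)"
      using phi_inf[OF pa, where t="- g"] h by simp
    moreover have "inf x y \<in> B" using B_inf[OF pa h(1,2)] .
    ultimately show "inf x y \<in> ?q" using h(5,8)
      by (auto simp: pull_mem intro!: bexI[of _ "inf a1 a2"] intro: le_infI1 le_infI2)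
  qed
  moreover have "\<forall>x\<in>B. \<forall>y\<in>B. sup x y \<in> ?q \<longrightarrow> x \<in> ?q \<or> y \<in> ?q"
  proof (intro ballI impI)
    fix x y assume xy: "x \<in> B" "y \<in> B" "sup x y \<in> ?q"
    then obtain a0 where h: "a0 \<in> p" "a0 \<in> I g" "\<phi> (- g) a0 \<le> sup x y" by (auto simp: pull_mem)
    define e where "e = \<phi> (- g) a0"
    have e: "e \<in> I (- g)" unfolding e_def using phi_mem'[OF pa h(2)] .
    define c1 where "c1 = inf e x"
    define c2 where "c2 = inf e y"
    have c: "c1 \<in> I (- g)" "c2 \<in> I (- g)" unfolding c1_def c2_def using I_inf[OF pa e] xy by auto
    have "e = inf e (sup x y)" using h(3) unfolding e_def by (simp add: inf.absorb1)
    then have "e = sup c1 c2" unfolding c1_def c2_def by (simp add: inf_sup_distrib1)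
    then have "a0 = sup (\<phi> g c1) (\<phi> g c2)"
      using phi_inv[OF pa h(2)] phi_sup[OF pa c] unfolding e_def by simp
    then have "\<phi> g c1 \<in> p \<or> \<phi> g c2 \<in> p"
      using pf_prime[OF pf I_sub[OF pa phi_mem[OF pa c(1)]] I_sub[OF pa phi_mem[OF pa c(2)]]] h(1) by simp
    moreover have "\<phi> (- g) (\<phi> g c1) \<le> x" using phi_inv'[OF pa c(1)] unfolding c1_def by simp
    moreover have "\<phi> (- g) (\<phi> g c2) \<le> y" using phi_inv'[OF pa c(2)] unfolding c2_def by simp
    ultimately show "x \<in> ?q \<or> y \<in> ?q" using xy phi_mem[OF pa c(1)] phi_mem[OF pa c(2)]
      by (auto simp: pull_mem)
  qed
  ultimately show "prime_filter B ?q" unfolding prime_filter_def by blast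
qed

lemma pull_comp:
  fixes B :: "'b::{distrib_lattice,order_bot} set" and I :: "'g::group_add \<Rightarrow> 'b set"
  assumes pa: "partial_action B I \<phi>" and pf: "prime_filter B p" and a: "a \<in> p" "a \<in> I g"
    and c: "c \<in> pull B I \<phi> g p" "c \<in> I h"
  shows "p \<inter> I (g + h) \<noteq> {}" "pull B I \<phi> h (pull B I \<phi> g p) = pull B I \<phi> (g + h) p"
proof -
  let ?q = "pull B I \<phi> g p"
  have qpf: "prime_filter B ?q" and eq: "\<phi> (- g) a \<in> ?q" using pull_pf[OF pa pf a] by auto
  have e: "\<phi> (- g) a \<in> I (- g)" using phi_mem'[OF pa a(2)] .
  have key: "\<phi> g (inf c1 (\<phi> (- g) a)) \<in> p \<inter> I g \<inter> I (g + h) \<and> inf c1 (\<phi> (- g) a) \<in> ?q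
     \<and> inf c1 (\<phi> (- g) a) \<in> I (- g) \<and> inf c1 (\<phi> (- g) a) \<in> I h" if c1: "c1 \<in> ?q" "c1 \<in> I h" for c1
  proof -
    let ?c = "inf c1 (\<phi> (- g) a)"
    have 1: "?c \<in> ?q" using pf_inf[OF qpf c1(1) eq] .
    have 2: "?c \<in> I h" using I_inf[OF pa c1(2) I_sub[OF pa e]] .
    have 3: "?c \<in> I (- g)" using I_inf2[OF pa e I_sub[OF pa c1(2)]] .
    have 4: "\<phi> g ?c \<in> p" using L2[OF pa pf 3] 1 by simp
    have "\<phi> g ?c \<in> \<phi> g ` (I (- g) \<inter> I h)" using 2 3 by (intro imageI) simp
    then have 5: "\<phi> g ?c \<in> I g \<inter> I (g + h)" unfolding pa_img[OF pa] .
    show ?thesis using 1 2 3 4 5 by blast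
  qed
  show "p \<inter> I (g + h) \<noteq> {}" using key[OF c] by blast
  show "pull B I \<phi> h ?q = pull B I \<phi> (g + h) p"
  proof (rule set_eqI, rule iffI)
    fix b assume "b \<in> pull B I \<phi> h ?q"
    then obtain c1 where h1: "b \<in> B" "c1 \<in> ?q" "c1 \<in> I h" "\<phi> (- h) c1 \<le> b"
      unfolding pull_mem[of b B I \<phi> h ?q] by blast
    let ?c = "inf c1 (\<phi> (- g) a)"
    have k: "\<phi> g ?c \<in> p \<inter> I g \<inter> I (g + h)" "?c \<in> I (- g)" "?c \<in> I h" using key[OF h1(2,3)] by auto
    have "\<phi> (- (g + h)) (\<phi> g ?c) = \<phi> (- (g + h) + g) ?c"
      using pa_comp[OF pa k(2), of "- (g + h)"] k(1) by simp
    also have "- (g + h) + g = - h" by (simp add: minus_add add.assoc)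
    finally have "\<phi> (- (g + h)) (\<phi> g ?c) = \<phi> (- h) ?c" .
    moreover have "\<phi> (- h) ?c \<le> \<phi> (- h) c1" using phi_mono[OF pa, where t="- h"] k(3) h1(3) by simp
    ultimately have le: "\<phi> (- (g + h)) (\<phi> g ?c) \<le> b" using h1(4) by simp
    show "b \<in> pull B I \<phi> (g + h) p" unfolding pull_mem
      using h1(1) k(1) le by (intro conjI bexI[of _ "\<phi> g ?c"]) auto
  next
    fix b assume "b \<in> pull B I \<phi> (g + h) p"
    then obtain d where h1: "b \<in> B" "d \<in> p" "d \<in> I (g + h)" "\<phi> (- (g + h)) d \<le> b"
      unfolding pull_mem[of b B I \<phi> "g + h" p] by blast
    let ?d = "inf d a"
    have d: "?d \<in> p" "?d \<in> I (g + h)" "?d \<in> I g"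
      using pf_inf[OF pf h1(2) a(1)] I_inf[OF pa h1(3) I_sub[OF pa a(2)]] I_inf2[OF pa a(2) I_sub[OF pa h1(3)]]
      by auto
    have "\<phi> (- g) ` (I (- (- g)) \<inter> I (g + h)) = I (- g) \<inter> I (- g + (g + h))" using pa_img[OF pa] .
    then have "\<phi> (- g) ` (I g \<inter> I (g + h)) = I (- g) \<inter> I h" by (simp add: add.assoc[symmetric])
    moreover have "\<phi> (- g) ?d \<in> \<phi> (- g) ` (I g \<inter> I (g + h))" using d by (intro imageI) simp
    ultimately have cI: "\<phi> (- g) ?d \<in> I h" by simp
    have cq: "\<phi> (- g) ?d \<in> ?q" unfolding pull_mem
      using d I_sub[OF pa cI] by (intro conjI bexI[of _ "?d"]) auto
    have "\<phi> (- h) (\<phi> (- g) ?d) = \<phi> (- h + - g) ?d"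
      using pa_comp[OF pa, where x="?d" and t="- g" and s="- h"] d cI by simp
    also have "- h + - g = - (g + h)" by (simp add: minus_add)
    finally have "\<phi> (- h) (\<phi> (- g) ?d) = \<phi> (- (g + h)) ?d" .
    moreover have "\<phi> (- (g + h)) ?d \<le> \<phi> (- (g + h)) d"
      using phi_mono[OF pa, where t="- (g + h)"] d(2) h1(3) by simp
    ultimately have le: "\<phi> (- h) (\<phi> (- g) ?d) \<le> b" using h1(4) by simp
    show "b \<in> pull B I \<phi> h ?q" unfolding pull_mem
      using h1(1) cq cI le by (intro conjI bexI[of _ "\<phi> (- g) ?d"]) auto
  qed
qed

lemma pull0:
  assumes pa: "partial_action B I \<phi>" and pf: "prime_filter B p"
  shows "pull B I \<phi> 0 p = p"
proof (rule set_eqI, rule iffI)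
  fix b assume "b \<in> pull B I \<phi> 0 p"
  then obtain a where "b \<in> B" "a \<in> p" "a \<in> I 0" "\<phi> (- 0) a \<le> b" unfolding pull_mem by blast
  then show "b \<in> p" using pa_I0[OF pa] pa_phi0[OF pa] pf_up[OF pf] by simp
next
  fix b assume b: "b \<in> p"
  then have "b \<in> B" using pf_sub[OF pf] by blast
  then show "b \<in> pull B I \<phi> 0 p" unfolding pull_mem using b pa_I0[OF pa] pa_phi0[OF pa]
    by (intro conjI bexI[of _ b]) auto
qed

lemma pull_inv:
  fixes B :: "'b::{distrib_lattice,order_bot} set" and I :: "'g::group_add \<Rightarrow> 'b set"
  assumes pa: "partial_action B I \<phi>" and pf: "prime_filter B p" and a: "a \<in> p" "a \<in> I g"
  shows "pull B I \<phi> (- g) (pull B I \<phi> g p) = p"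
  using pull_comp(2)[OF pa pf a pull_pf(2)[OF pa pf a] phi_mem'[OF pa a(2)]] pull0[OF pa pf] by simp

lemma alpha_in: "prime_filter B p \<Longrightarrow> p \<inter> I g \<noteq> {} \<Longrightarrow> alpha B I \<phi> g F p = F (pull B I \<phi> g p)"
  by (simp add: alpha_def)
lemma alpha_out: "\<not> (prime_filter B p \<and> p \<inter> I g \<noteq> {}) \<Longrightarrow> alpha B I \<phi> g F p = 0"
  by (auto simp: alpha_def)
lemma alpha_zero: "alpha B I \<phi> g (\<lambda>p. 0) = (\<lambda>p. 0)"
  by (auto simp: alpha_def)

lemma pull_pf':
  fixes B :: "'b::{distrib_lattice,order_bot} set" and I :: "'g::group_add \<Rightarrow> 'b set"
  assumes pa: "partial_action B I \<phi>" and pf: "prime_filter B p" and ne: "p \<inter> I g \<noteq> {}"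
  shows "prime_filter B (pull B I \<phi> g p)" "pull B I \<phi> g p \<inter> I (- g) \<noteq> {}"
    "pull B I \<phi> (- g) (pull B I \<phi> g p) = p"
proof -
  obtain a where a: "a \<in> p" "a \<in> I g" using ne by blast
  show "prime_filter B (pull B I \<phi> g p)" using pull_pf[OF pa pf a] by simp
  show "pull B I \<phi> g p \<inter> I (- g) \<noteq> {}" using pull_pf(2)[OF pa pf a] phi_mem'[OF pa a(2)] by blast
  show "pull B I \<phi> (- g) (pull B I \<phi> g p) = p" using pull_inv[OF pa pf a] .
qed

lemma pull_comp':
  fixes B :: "'b::{distrib_lattice,order_bot} set" and I :: "'g::group_add \<Rightarrow> 'b set"
  assumes pa: "partial_action B I \<phi>" and pf: "prime_filter B p" and ne: "p \<inter> I g \<noteq> {}"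
    and ne2: "pull B I \<phi> g p \<inter> I h \<noteq> {}"
  shows "p \<inter> I (g + h) \<noteq> {}" "pull B I \<phi> h (pull B I \<phi> g p) = pull B I \<phi> (g + h) p"
proof -
  obtain a where a: "a \<in> p" "a \<in> I g" using ne by blast
  obtain c where c: "c \<in> pull B I \<phi> g p" "c \<in> I h" using ne2 by blast
  show "p \<inter> I (g + h) \<noteq> {}" "pull B I \<phi> h (pull B I \<phi> g p) = pull B I \<phi> (g + h) p"
    using pull_comp[OF pa pf a c] by auto
qed

lemma alpha_ind:
  assumes pa: "partial_action B I \<phi>"
  shows "alpha B I \<phi> g (ind B X) p =
    (if prime_filter B p \<and> p \<inter> I g \<noteq> {} \<and> X \<in> pull B I \<phi> g p then 1 else 0)"
proof (cases "prime_filter B p \<and> p \<inter> I g \<noteq> {}")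
  case True
  then show ?thesis using pull_pf'(1)[OF pa, of p g] by (simp add: alpha_in ind_def)
next
  case False
  then show ?thesis by (simp add: alpha_out)
qed

lemma alpha_ind01:
  assumes pa: "partial_action B I \<phi>"
  shows "alpha B I \<phi> g (ind B X) p * alpha B I \<phi> g (ind B X) p = (alpha B I \<phi> g (ind B X) p :: 'r::comm_ring_1)"
  by (simp add: alpha_ind[OF pa])

lemma AC:
  fixes B :: "'b::{distrib_lattice,order_bot} set" and I :: "'g::group_add \<Rightarrow> 'b set"
  assumes pa: "partial_action B I \<phi>" and pf: "prime_filter B p" and ne: "p \<inter> I h \<noteq> {}"
    and ne2: "pull B I \<phi> h p \<inter> I m \<noteq> {}"
  shows "alpha B I \<phi> m F (pull B I \<phi> h p) = alpha B I \<phi> (h + m) F p"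
  using pull_comp'[OF pa pf ne ne2] pull_pf'(1)[OF pa pf ne] pf ne2
  by (simp add: alpha_in)

lemma PF:
  fixes B :: "'b::{distrib_lattice,order_bot} set" and I :: "'g::group_add \<Rightarrow> 'b set"
  assumes pa: "partial_action B I \<phi>" and A: "A \<in> I k" and X: "X \<in> B"
  shows "ind B A p * alpha B I \<phi> k (ind B X) p = (ind B (\<phi> k (inf (\<phi> (- k) A) X)) p :: 'r::comm_ring_1)"
proof (cases "prime_filter B p")
  case False
  then show ?thesis by (simp add: ind_def alpha_out)
next
  case pf: True
  let ?E = "inf (\<phi> (- k) A) X"
  have eA: "\<phi> (- k) A \<in> I (- k)" using phi_mem'[OF pa A] .
  have E: "?E \<in> I (- k)" using I_inf[OF pa eA X] .
  show ?thesis
  proof (cases "A \<in> p")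
    case True
    then have ne: "p \<inter> I k \<noteq> {}" using A by blast
    have qpf: "prime_filter B (pull B I \<phi> k p)" using pull_pf'(1)[OF pa pf ne] .
    have "\<phi> (- k) A \<in> pull B I \<phi> k p" using L2[OF pa pf eA] phi_inv[OF pa A] True by simp
    then have "?E \<in> pull B I \<phi> k p \<longleftrightarrow> X \<in> pull B I \<phi> k p"
      using pf_inf[OF qpf] pf_up[OF qpf] X by (meson inf.cobounded2)
    then have "\<phi> k ?E \<in> p \<longleftrightarrow> X \<in> pull B I \<phi> k p" using L2[OF pa pf E] by simp
    then show ?thesis using True ne pf by (simp add: ind_def[of B A] ind_def[of B "\<phi> k ?E"] alpha_ind[OF pa])
  next
    case False
    have "\<phi> k ?E \<le> \<phi> k (\<phi> (- k) A)" by (rule phi_mono[OF pa E eA]) simp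
    then have "\<phi> k ?E \<le> A" using phi_inv[OF pa A] by simp
    then have "\<phi> k ?E \<notin> p" using False pf_up[OF pf] I_sub[OF pa A] by blast
    then show ?thesis using False by (simp add: ind_def[of B A] ind_def[of B "\<phi> k ?E"])
  qed
qed

lemma K:
  fixes B :: "'b::{distrib_lattice,order_bot} set" and I :: "'g::group_add \<Rightarrow> 'b set"
  assumes pa: "partial_action B I \<phi>" and W: "W \<in> I g"
  shows "alpha B I \<phi> (k + g) (ind B (\<phi> (- g) W)) p =
     (if prime_filter B p \<and> p \<inter> I k \<noteq> {} \<and> W \<in> pull B I \<phi> k p then 1 else 0)"
proof -
  have UW: "\<phi> (- g) W \<in> I (- g)" using phi_mem'[OF pa W] .
  have "(prime_filter B p \<and> p \<inter> I (k + g) \<noteq> {} \<and> \<phi> (- g) W \<in> pull B I \<phi> (k + g) p) \<longleftrightarrow>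
        (prime_filter B p \<and> p \<inter> I k \<noteq> {} \<and> W \<in> pull B I \<phi> k p)"
  proof (intro iffI; elim conjE)
    assume pf: "prime_filter B p" and ne': "p \<inter> I (k + g) \<noteq> {}"
      and U: "\<phi> (- g) W \<in> pull B I \<phi> (k + g) p"
    have ne2: "pull B I \<phi> (k + g) p \<inter> I (- g) \<noteq> {}" using U UW by blast
    have c: "p \<inter> I (k + g + - g) \<noteq> {}" "pull B I \<phi> (- g) (pull B I \<phi> (k + g) p) = pull B I \<phi> (k + g + - g) p"
      using pull_comp'[OF pa pf ne' ne2] by auto
    have kk: "k + g + - g = k" by (simp add: add.assoc)
    have "W \<in> pull B I \<phi> (- g) (pull B I \<phi> (k + g) p)"
      using L2[OF pa pull_pf'(1)[OF pa pf ne'], of W "- g"] W U by simp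
    then show "prime_filter B p \<and> p \<inter> I k \<noteq> {} \<and> W \<in> pull B I \<phi> k p" using c kk pf by simp
  next
    assume pf: "prime_filter B p" and ne': "p \<inter> I k \<noteq> {}" and Wq: "W \<in> pull B I \<phi> k p"
    have ne2: "pull B I \<phi> k p \<inter> I g \<noteq> {}" using Wq W by blast
    have c: "p \<inter> I (k + g) \<noteq> {}" "pull B I \<phi> g (pull B I \<phi> k p) = pull B I \<phi> (k + g) p"
      using pull_comp'[OF pa pf ne' ne2] by auto
    have "\<phi> (- g) W \<in> pull B I \<phi> g (pull B I \<phi> k p)"
      using L2[OF pa pull_pf'(1)[OF pa pf ne'] UW] phi_inv[OF pa W] Wq by simp
    then show "prime_filter B p \<and> p \<inter> I (k + g) \<noteq> {} \<and> \<phi> (- g) W \<in> pull B I \<phi> (k + g) p" using c pf by simp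
  qed
  then show ?thesis by (simp add: alpha_ind[OF pa])
qed

lemma Lc_supp: "f \<in> Lc B S \<Longrightarrow> f p \<noteq> 0 \<Longrightarrow> prime_filter B p \<and> (\<exists>U\<in>S. U \<in> p)"
proof -
  assume f: "f \<in> Lc B S" and nz: "f p \<noteq> 0"
  then obtain F c where F: "finite F" "F \<subseteq> S" "f = (\<lambda>p. \<Sum>U\<in>F. c U * ind B U p)" unfolding Lc_def by blast
  then have "(\<Sum>U\<in>F. c U * ind B U p) \<noteq> 0" using nz by simp
  then obtain U where "U \<in> F" "c U * ind B U p \<noteq> 0" using sum.not_neutral_contains_not_neutral by blast
  then show ?thesis using F(2) by (auto simp: ind_def split: if_splits)
qed

lemma Lc_supp_I: "f \<in> Lc B (I g) \<Longrightarrow> f p \<noteq> 0 \<Longrightarrow> prime_filter B p \<and> p \<inter> I g \<noteq> {}"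
  using Lc_supp by blast

lemma Lc_zero: "(\<lambda>p. 0) \<in> Lc B S"
  unfolding Lc_def by (rule CollectI, rule exI[of _ "{}"]) auto

lemma Lc_add: assumes "f \<in> Lc B S" "g \<in> Lc B S" shows "(\<lambda>p. f p + g p) \<in> Lc B S"
proof -
  obtain F c where F: "finite F" "F \<subseteq> S" "f = (\<lambda>p. \<Sum>U\<in>F. c U * ind B U p)" using assms(1) unfolding Lc_def by blast
  obtain F' c' where F': "finite F'" "F' \<subseteq> S" "g = (\<lambda>p. \<Sum>U\<in>F'. c' U * ind B U p)" using assms(2) unfolding Lc_def by blast
  define d where "d U = (if U \<in> F then c U else 0) + (if U \<in> F' then c' U else 0)" for U
  have "(\<lambda>p. f p + g p) = (\<lambda>p. \<Sum>U\<in>F \<union> F'. d U * ind B U p)"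
  proof
    fix p
    have "(\<Sum>U\<in>F \<union> F'. d U * ind B U p) = (\<Sum>U\<in>F \<union> F'. (if U \<in> F then c U * ind B U p else 0))
       + (\<Sum>U\<in>F \<union> F'. (if U \<in> F' then c' U * ind B U p else 0))"
      unfolding d_def sum.distrib[symmetric] by (intro sum.cong refl) (auto simp: distrib_right)
    also have "\<dots> = (\<Sum>U\<in>(F \<union> F') \<inter> F. c U * ind B U p) + (\<Sum>U\<in>(F \<union> F') \<inter> F'. c' U * ind B U p)"
      using F F' by (simp add: sum.inter_restrict[symmetric])
    also have "\<dots> = f p + g p" using F F' by (simp add: Int_absorb1)
    finally show "f p + g p = (\<Sum>U\<in>F \<union> F'. d U * ind B U p)" by simp
  qed
  then show ?thesis unfolding Lc_def using F F' by blast
qed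

lemma Lc_sum: assumes "finite K" "\<forall>j\<in>K. F j \<in> Lc B S" shows "(\<lambda>p. \<Sum>j\<in>K. F j p) \<in> Lc B S"
  using assms
proof (induction K rule: finite_induct)
  case empty
  then show ?case using Lc_zero by simp
next
  case (insert x K)
  then show ?case using Lc_add[of "F x" B S "\<lambda>p. \<Sum>j\<in>K. F j p"] by simp
qed

lemma Lc_mult:
  assumes f: "f \<in> Lc B S" and h: "\<And>A p. A \<in> S \<Longrightarrow> ind B A p * h p = ind B (E A) p"
    and E: "\<And>A. A \<in> S \<Longrightarrow> E A \<in> S'"
  shows "(\<lambda>p. f p * h p) \<in> Lc B S'"
proof -
  obtain F c where F: "finite F" "F \<subseteq> S" "f = (\<lambda>p. \<Sum>U\<in>F. c U * ind B U p)" using f unfolding Lc_def by blast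
  define c' where "c' U = (\<Sum>A\<in>{A \<in> F. E A = U}. c A)" for U
  have "(\<lambda>p. f p * h p) = (\<lambda>p. \<Sum>U\<in>E ` F. c' U * ind B U p)"
  proof
    fix p
    have "f p * h p = (\<Sum>A\<in>F. c A * ind B (E A) p)"
      unfolding F(3) sum_distrib_right using F(2) h by (intro sum.cong) (auto simp: mult.assoc)
    also have "\<dots> = (\<Sum>U\<in>E ` F. \<Sum>A\<in>{A \<in> F. E A = U}. c A * ind B (E A) p)"
      using sum.image_gen[OF F(1)] .
    also have "\<dots> = (\<Sum>U\<in>E ` F. c' U * ind B U p)"
      unfolding c'_def sum_distrib_right by (intro sum.cong) auto
    finally show "f p * h p = (\<Sum>U\<in>E ` F. c' U * ind B U p)" .
  qed
  moreover have "E ` F \<subseteq> S'" using F(2) E by blast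
  ultimately show ?thesis unfolding Lc_def using F(1) by blast
qed

lemma sum_fun_apply: "(\<Sum>x\<in>A. f x) p = (\<Sum>x\<in>A. f x p)"
  by (induction A rule: infinite_finite_induct) auto

lemma SC:
  fixes B :: "'b::{distrib_lattice,order_bot} set" and I :: "'g::group_add \<Rightarrow> 'b set"
  assumes pa: "partial_action B I \<phi>" and a: "a \<in> skew B I \<phi>"
  shows "skew_mult B I \<phi> a b k p = (\<Sum>h\<in>{g. a g \<noteq> 0}. a h p * alpha B I \<phi> h (b (- h + k)) p)"
  unfolding skew_mult_def sum_fun_apply
proof (intro sum.cong refl)
  fix h
  have ah: "a h \<in> Lc B (I h)" using a unfolding skew_def by blast
  show "alpha B I \<phi> h (\<lambda>p. alpha B I \<phi> (- h) (a h) p * b (- h + k) p) p = a h p * alpha B I \<phi> h (b (- h + k)) p"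
  proof (cases "prime_filter B p \<and> p \<inter> I h \<noteq> {}")
    case True
    then show ?thesis using pull_pf'[OF pa, of p h] by (simp add: alpha_in)
  next
    case False
    then have "a h p = 0" using Lc_supp_I[where I=I and g=h, OF ah] by blast
    then show ?thesis using False by (simp add: alpha_out)
  qed
qed

lemma LD:
  fixes B :: "'b::{distrib_lattice,order_bot} set" and I :: "'g::group_add \<Rightarrow> 'b set"
  assumes pa: "partial_action B I \<phi>" and a: "a \<in> skew B I \<phi>"
  shows "skew_mult B I \<phi> a (delta B X 0) k p = a k p * alpha B I \<phi> k (ind B X) p"
proof -
  have "skew_mult B I \<phi> a (delta B X 0) k p =
     (\<Sum>h\<in>{g. a g \<noteq> 0}. if h = k then a k p * alpha B I \<phi> k (ind B X) p else 0)"
    unfolding SC[OF pa a] delta_def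
    by (intro sum.cong refl) (auto simp: alpha_def add_eq_0_iff2)
  also have "\<dots> = a k p * alpha B I \<phi> k (ind B X) p"
    using a unfolding skew_def by (auto simp: sum.delta')
  finally show ?thesis .
qed

lemma skew_of:
  fixes B :: "'b::{distrib_lattice,order_bot} set" and I :: "'g::group_add \<Rightarrow> 'b set"
  assumes pa: "partial_action B I \<phi>" and X: "X \<in> B" and a: "a \<in> skew B I \<phi>"
  shows "(\<lambda>k p. a k p * alpha B I \<phi> k (ind B X) p :: 'r::comm_ring_1) \<in> skew B I \<phi>"
proof -
  have "{k. (\<lambda>p. a k p * alpha B I \<phi> k (ind B X) p) \<noteq> 0} \<subseteq> {k. a k \<noteq> 0}"
    by (auto simp: zero_fun_def)
  then have fin: "finite {k. (\<lambda>p. a k p * alpha B I \<phi> k (ind B X) p) \<noteq> 0}"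
    using a unfolding skew_def by (auto intro: finite_subset)
  have "(\<lambda>p. a k p * alpha B I \<phi> k (ind B X) p) \<in> Lc B (I k)" for k
  proof (rule Lc_mult[where E="\<lambda>A. \<phi> k (inf (\<phi> (- k) A) X)"])
    show "a k \<in> Lc B (I k)" using a unfolding skew_def by blast
    show "ind B A p * alpha B I \<phi> k (ind B X) p = ind B (\<phi> k (inf (\<phi> (- k) A) X)) p" if "A \<in> I k" for A p
      using PF[OF pa that X] .
    show "\<phi> k (inf (\<phi> (- k) A) X) \<in> I k" if "A \<in> I k" for A
      using phi_mem[OF pa I_inf[OF pa phi_mem'[OF pa that] X]] .
  qed
  then show ?thesis using fin unfolding skew_def by blast
qed

lemma LI:
  fixes B :: "'b::{distrib_lattice,order_bot} set" and I :: "'g::group_add \<Rightarrow> 'b set"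
  assumes pa: "partial_action B I \<phi>" and y: "(y :: 'g \<Rightarrow> 'b set \<Rightarrow> 'r::comm_ring_1) \<in> left_ideal B I \<phi> (delta B X 0)"
  shows "\<exists>a\<in>skew B I \<phi>. y = (\<lambda>k p. a k p * alpha B I \<phi> k (ind B X) p)"
proof -
  obtain a where a: "a \<in> skew B I \<phi>" "y = skew_mult B I \<phi> a (delta B X 0)" using y unfolding left_ideal_def by blast
  have "y = (\<lambda>k p. a k p * alpha B I \<phi> k (ind B X) p)"
    unfolding a(2) by (intro ext) (rule LD[OF pa a(1)])
  then show ?thesis using a(1) by blast
qed

lemma LI_skew:
  fixes B :: "'b::{distrib_lattice,order_bot} set" and I :: "'g::group_add \<Rightarrow> 'b set"
  assumes pa: "partial_action B I \<phi>" and X: "X \<in> B" and y: "(y :: 'g \<Rightarrow> 'b set \<Rightarrow> 'r::comm_ring_1) \<in> left_ideal B I \<phi> (delta B X 0)"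
  shows "y \<in> skew B I \<phi>"
  using LI[OF pa y] skew_of[OF pa X] by auto

lemma LI_intro:
  fixes B :: "'b::{distrib_lattice,order_bot} set" and I :: "'g::group_add \<Rightarrow> 'b set"
  assumes pa: "partial_action B I \<phi>" and a: "a \<in> skew B I \<phi>"
  shows "skew_mult B I \<phi> a (delta B X 0) \<in> left_ideal B I \<phi> (delta B X 0)"
  using a unfolding left_ideal_def by blast

fun djc :: "'b::{distrib_lattice,order_bot} set \<Rightarrow> ('g \<times> 'b) list \<Rightarrow> 'b \<Rightarrow> bool" where
  "djc B [] U = (U = bot)"
| "djc B (gw # qs) U = (\<exists>c\<in>B. snd gw \<in> B \<and> inf (snd gw) c = bot \<and> sup (snd gw) c = U \<and> djc B qs c)"

lemma dj_sum:
  assumes "djc B qs U" and pf: "prime_filter B q" and gb: "gba B"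
  shows "(\<Sum>j<length qs. if snd (qs ! j) \<in> q then 1 else 0 :: 'r::comm_ring_1) = (if U \<in> q then 1 else 0)"
  using assms(1)
proof (induction qs arbitrary: U)
  case Nil
  then show ?case using pf_bot[OF pf] by simp
next
  case (Cons gw qs)
  then obtain c where c: "c \<in> B" "snd gw \<in> B" "inf (snd gw) c = bot" "sup (snd gw) c = U" "djc B qs c" by auto
  have IH: "(\<Sum>j<length qs. if snd (qs ! j) \<in> q then 1 else 0 :: 'r) = (if c \<in> q then 1 else 0)"
    using Cons.IH[OF c(5)] .
  have "sup (snd gw) c \<in> B" using gb c(1,2) unfolding gba_def by blast
  then have Ub: "U \<in> B" using c(4) by simp
  have nb: "\<not> (snd gw \<in> q \<and> c \<in> q)" using pf_inf[OF pf, of "snd gw" c] c(3) pf_bot[OF pf] by auto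
  have "U \<in> q \<longleftrightarrow> snd gw \<in> q \<or> c \<in> q"
    using pf_prime[OF pf c(2) c(1)] pf_up[OF pf _ Ub] c(4) by auto
  then show ?case using IH nb
    by (simp add: sum.lessThan_Suc_shift del: sum.lessThan_Suc)
qed

lemma exist_dj:
  fixes B :: "'b::{distrib_lattice,order_bot} set" and I :: "'g::group_add \<Rightarrow> 'b set"
  assumes pa: "partial_action B I \<phi>" and id: "gba_ideal B B1"
  shows "U \<in> B \<Longrightarrow> (\<forall>(g, V)\<in>set ps. V \<in> I (- g) \<inter> B1) \<Longrightarrow> U \<le> join_images \<phi> ps \<Longrightarrow>
    \<exists>qs. djc B qs U \<and> (\<forall>(g, W)\<in>set qs. W \<in> I g \<and> W \<le> U \<and> \<phi> (- g) W \<in> B1)"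
proof (induction ps arbitrary: U)
  case Nil
  then have "U = bot" by (simp add: join_images_def order.antisym)
  then show ?case by (intro exI[of _ "[]"]) simp
next
  case (Cons gv ps)
  obtain g V where gv: "gv = (g, V)" by (cases gv)
  have V: "V \<in> I (- g)" "V \<in> B1" using Cons.prems(2) gv by auto
  let ?J = "join_images \<phi> ps"
  have jc: "join_images \<phi> (gv # ps) = sup (\<phi> g V) ?J" unfolding gv join_images_def by simp
  have pV: "\<phi> g V \<in> I g" using phi_mem[OF pa V(1)] .
  define T where "T = inf U (\<phi> g V)"
  have T: "T \<in> I g" "T \<le> U" "T \<le> \<phi> g V" unfolding T_def using I_inf2[OF pa pV Cons.prems(1)] by auto
  have TB: "T \<in> B" using I_sub[OF pa T(1)] .
  obtain c where c: "c \<in> B" "inf T c = bot" "sup T c = U"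
    using pa_gba[OF pa] TB T(2) Cons.prems(1) unfolding gba_def by blast
  have cU: "c \<le> U" using c(3) by auto
  have "inf c (\<phi> g V) = inf c T" unfolding T_def using cU by (metis inf.absorb1 inf.assoc)
  then have cv: "inf c (\<phi> g V) = bot" using c(2) by (simp add: inf_commute)
  have "c = inf c U" using cU by (simp add: inf.absorb1)
  also have "\<dots> \<le> inf c (sup (\<phi> g V) ?J)" using Cons.prems(3) jc by (simp add: le_infI2)
  also have "\<dots> = sup (inf c (\<phi> g V)) (inf c ?J)" by (simp add: inf_sup_distrib1)
  also have "\<dots> = inf c ?J" using cv by (simp add: sup.absorb2)
  finally have cJ: "c \<le> ?J" by (simp add: le_inf_iff)
  have "\<forall>(g, V)\<in>set ps. V \<in> I (- g) \<inter> B1" using Cons.prems(2) by simp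
  then obtain qs where qs: "djc B qs c" "\<forall>(g, W)\<in>set qs. W \<in> I g \<and> W \<le> c \<and> \<phi> (- g) W \<in> B1"
    using Cons.IH[OF c(1) _ cJ] by blast
  have "\<phi> (- g) T \<le> \<phi> (- g) (\<phi> g V)" using phi_mono[OF pa, where t="- g"] T pV by simp
  then have TV: "\<phi> (- g) T \<le> V" using phi_inv'[OF pa V(1)] by simp
  have "\<phi> (- g) T \<in> B" using I_sub[OF pa phi_mem'[OF pa T(1)]] .
  then have "inf V (\<phi> (- g) T) \<in> B1" using id V(2) unfolding gba_ideal_def by blast
  then have TB1: "\<phi> (- g) T \<in> B1" using TV by (simp add: inf.absorb2)
  show ?case
  proof (intro exI[of _ "(g, T) # qs"] conjI)
    show "djc B ((g, T) # qs) U" using c qs(1) TB by auto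
    show "\<forall>(g', W)\<in>set ((g, T) # qs). W \<in> I g' \<and> W \<le> U \<and> \<phi> (- g') W \<in> B1"
      using qs(2) T TB1 cU by (auto intro: order.trans)
  qed
qed

theorem lemma4p9:
  fixes B1 B2 :: "'b::{distrib_lattice,order_bot} set"
    and I1 I2 :: "'g::group_add \<Rightarrow> 'b set"
    and \<phi>1 \<phi>2 :: "'g \<Rightarrow> 'b \<Rightarrow> 'b"
  assumes sub: "partial_subaction B1 I1 \<phi>1 B2 I2 \<phi>2"
    and ideal: "gba_ideal B2 B1"
    and cover: "\<forall>U\<in>B2. \<exists>ps. (\<forall>(g, V)\<in>set ps. V \<in> I2 (- g) \<inter> B1) \<and> U \<le> join_images \<phi>2 ps"
  shows "\<forall>U\<in>B2. \<exists>(J :: nat set) (Us :: nat \<Rightarrow> 'b)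
           (f :: (nat \<Rightarrow> ('g \<Rightarrow> 'b set \<Rightarrow> 'r::comm_ring_1)) \<Rightarrow> ('g \<Rightarrow> 'b set \<Rightarrow> 'r)).
           (\<forall>i\<in>J. Us i \<in> B1) \<and>
           skew_module_hom B2 I2 \<phi>2
             (dsum J (\<lambda>i. left_ideal B2 I2 \<phi>2 (delta B2 (Us i) 0)))
             (left_ideal B2 I2 \<phi>2 (delta B2 U 0)) f \<and>
           f ` dsum J (\<lambda>i. left_ideal B2 I2 \<phi>2 (delta B2 (Us i) 0))
             = left_ideal B2 I2 \<phi>2 (delta B2 U 0)"
proof (intro ballI)
  fix U assume U: "U \<in> B2"
  have pa: "partial_action B2 I2 \<phi>2" using sub unfolding partial_subaction_def by blast
  have B12: "B1 \<subseteq> B2" using ideal unfolding gba_ideal_def by blast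
  obtain ps where ps: "\<forall>(g, V)\<in>set ps. V \<in> I2 (- g) \<inter> B1" "U \<le> join_images \<phi>2 ps" using bspec[OF cover U] by (elim exE conjE)
  obtain qs where qs: "djc B2 qs U" "\<forall>(g, W)\<in>set qs. W \<in> I2 g \<and> W \<le> U \<and> \<phi>2 (- g) W \<in> B1"
    using exist_dj[OF pa ideal U ps(1) ps(2)] by (elim exE conjE)
  define n where "n = length qs"
  define gs where "gs j = fst (qs ! j)" for j
  define Ws where "Ws j = snd (qs ! j)" for j
  define Us where "Us j = \<phi>2 (- gs j) (Ws j)" for j
  have Wj: "Ws j \<in> I2 (gs j)" "Ws j \<le> U" "Us j \<in> B1" if "j < n" for j
  proof -
    have "qs ! j \<in> set qs" using that unfolding n_def by (rule nth_mem)
    then have "(case qs ! j of (g, W) \<Rightarrow> W \<in> I2 g \<and> W \<le> U \<and> \<phi>2 (- g) W \<in> B1)" by (rule bspec[OF qs(2)])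
    then show "Ws j \<in> I2 (gs j)" "Ws j \<le> U" "Us j \<in> B1" unfolding Ws_def gs_def Us_def
      by (simp_all add: case_prod_beta)
  qed
  have UjB: "Us j \<in> B2" if "j < n" for j using Wj(3)[OF that] B12 by blast
  have WjB: "Ws j \<in> B2" if "j < n" for j using I_sub[OF pa Wj(1)[OF that]] .
  define D where "D = dsum {..<n} (\<lambda>i. left_ideal B2 I2 \<phi>2 (delta B2 (Us i) 0 :: 'g \<Rightarrow> 'b set \<Rightarrow> 'r))"
  define N where "N = left_ideal B2 I2 \<phi>2 (delta B2 U 0 :: 'g \<Rightarrow> 'b set \<Rightarrow> 'r)"
  define f where "f x = (\<lambda>k p. \<Sum>j<n. x j (k + gs j) p * alpha B2 I2 \<phi>2 (k + gs j) (ind B2 (Us j)) p)"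
    for x :: "nat \<Rightarrow> 'g \<Rightarrow> 'b set \<Rightarrow> 'r"
  have Kj: "alpha B2 I2 \<phi>2 (k + gs j) (ind B2 (Us j)) p =
      (if prime_filter B2 p \<and> p \<inter> I2 k \<noteq> {} \<and> Ws j \<in> pull B2 I2 \<phi>2 k p then 1 else (0::'r))"
    if "j < n" for j k p
    unfolding Us_def using K[OF pa Wj(1)[OF that]] .
  have xD: "x j \<in> left_ideal B2 I2 \<phi>2 (delta B2 (Us j) 0)" if "x \<in> D" "j < n" for x j
    using that unfolding D_def dsum_def by blast
  have xsk: "x j \<in> skew B2 I2 \<phi>2" if "x \<in> D" "j < n" for x j
    using LI_skew[OF pa UjB[OF that(2)] xD[OF that]] .
  have fin_D: "finite {k. f x k \<noteq> 0}" if x: "x \<in> D" for x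
  proof -
    have "{k. f x k \<noteq> 0} \<subseteq> (\<Union>j<n. (\<lambda>m. m + - gs j) ` {m. x j m \<noteq> 0})"
    proof
      fix k assume "k \<in> {k. f x k \<noteq> 0}"
      then obtain p where "f x k p \<noteq> 0" by (auto simp: fun_eq_iff)
      then obtain j where j: "j < n" "x j (k + gs j) p * alpha B2 I2 \<phi>2 (k + gs j) (ind B2 (Us j)) p \<noteq> 0"
        unfolding f_def using sum.not_neutral_contains_not_neutral by blast
      then have "x j (k + gs j) \<noteq> 0" by auto
      moreover have "k = (k + gs j) + - gs j" by (simp add: add.assoc)
      ultimately show "k \<in> (\<Union>j<n. (\<lambda>m. m + - gs j) ` {m. x j m \<noteq> 0})" using j(1) by blast
    qed
    moreover have "finite (\<Union>j<n. (\<lambda>m. m + - gs j) ` {m. x j m \<noteq> 0})"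
      using xsk[OF x] unfolding skew_def by auto
    ultimately show ?thesis by (rule finite_subset)
  qed
  have Lc_D: "f x k \<in> Lc B2 (I2 k)" if x: "x \<in> D" for x k
  proof -
  have "\<forall>j\<in>{..<n}. (\<lambda>p. x j (k + gs j) p * alpha B2 I2 \<phi>2 (k + gs j) (ind B2 (Us j)) p) \<in> Lc B2 (I2 k)"
  proof (intro ballI)
    fix j assume "j \<in> {..<n}"
    then have j: "j < n" by simp
    let ?h = "k + gs j"
    show "(\<lambda>p. x j ?h p * alpha B2 I2 \<phi>2 ?h (ind B2 (Us j)) p) \<in> Lc B2 (I2 k)"
    proof (rule Lc_mult[where E="\<lambda>A. \<phi>2 ?h (inf (\<phi>2 (- ?h) A) (Us j))"])
      show "x j ?h \<in> Lc B2 (I2 ?h)" using xsk[OF x j] unfolding skew_def by blast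
      show "ind B2 A p * alpha B2 I2 \<phi>2 ?h (ind B2 (Us j)) p = ind B2 (\<phi>2 ?h (inf (\<phi>2 (- ?h) A) (Us j))) p"
        if "A \<in> I2 ?h" for A p using PF[OF pa that UjB[OF j]] .
      show "\<phi>2 ?h (inf (\<phi>2 (- ?h) A) (Us j)) \<in> I2 k" if A: "A \<in> I2 ?h" for A
      proof -
        have UI: "Us j \<in> I2 (- gs j)" unfolding Us_def using phi_mem'[OF pa Wj(1)[OF j]] .
        have "inf (\<phi>2 (- ?h) A) (Us j) \<in> I2 (- ?h) \<inter> I2 (- gs j)"
          using I_inf[OF pa phi_mem'[OF pa A] UjB[OF j]] I_inf2[OF pa UI I_sub[OF pa phi_mem'[OF pa A]]] by blast
        then have "\<phi>2 ?h (inf (\<phi>2 (- ?h) A) (Us j)) \<in> \<phi>2 ?h ` (I2 (- ?h) \<inter> I2 (- gs j))" by (rule imageI)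
        also have "\<dots> = I2 ?h \<inter> I2 (?h + - gs j)" by (rule pa_img[OF pa])
        also have "?h + - gs j = k" by (simp add: add.assoc)
        finally show ?thesis by blast
      qed
    qed
  qed
  from Lc_sum[OF finite_lessThan this] show ?thesis unfolding f_def by simp
  qed
  have fN: "f x \<in> N" if x: "x \<in> D" for x
  proof -
    have sk: "f x \<in> skew B2 I2 \<phi>2" unfolding skew_def using fin_D[OF x] Lc_D[OF x] by blast
    have "f x = skew_mult B2 I2 \<phi>2 (f x) (delta B2 U 0)"
    proof (intro ext)
      fix k p
      show "f x k p = skew_mult B2 I2 \<phi>2 (f x) (delta B2 U 0) k p"
      proof (cases "alpha B2 I2 \<phi>2 k (ind B2 U) p = (1::'r)")
        case True
        then show ?thesis using LD[OF pa sk, of U k p] by simp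
      next
        case False
        then have a0: "alpha B2 I2 \<phi>2 k (ind B2 U) p = (0::'r)" by (simp add: alpha_ind[OF pa] split: if_splits)
        have "f x k p = 0" unfolding f_def
        proof (intro sum.neutral ballI)
          fix j assume "j \<in> {..<n}"
          then have j: "j < n" by simp
          have "\<not> (prime_filter B2 p \<and> p \<inter> I2 k \<noteq> {} \<and> Ws j \<in> pull B2 I2 \<phi>2 k p)"
          proof
            assume h: "prime_filter B2 p \<and> p \<inter> I2 k \<noteq> {} \<and> Ws j \<in> pull B2 I2 \<phi>2 k p"
            then have "U \<in> pull B2 I2 \<phi>2 k p" using Wj(2)[OF j] U unfolding pull_mem by (auto intro: order.trans)
            then show False using h a0 by (simp add: alpha_ind[OF pa])
          qed
          then show "x j (k + gs j) p * alpha B2 I2 \<phi>2 (k + gs j) (ind B2 (Us j)) p = 0"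
            using Kj[OF j, of k p] by auto
        qed
        then show ?thesis using LD[OF pa sk, of U k p] a0 by simp
      qed
    qed
    then show ?thesis unfolding N_def left_ideal_def using sk by blast
  qed
  have fadd: "f (x + y) = f x + f y" for x y
    unfolding f_def by (intro ext) (simp add: plus_fun_def distrib_right sum.distrib)
  have flin: "f (\<lambda>i. skew_mult B2 I2 \<phi>2 a (x i)) = skew_mult B2 I2 \<phi>2 a (f x)"
    if a: "a \<in> skew B2 I2 \<phi>2" and x: "x \<in> D" for a x
  proof (intro ext)
    fix k p
    let ?S = "{g. a g \<noteq> 0}"
    have termh: "a h p * alpha B2 I2 \<phi>2 h (f x (- h + k)) p =
       (\<Sum>j<n. a h p * alpha B2 I2 \<phi>2 h (x j (- h + (k + gs j))) p * alpha B2 I2 \<phi>2 (k + gs j) (ind B2 (Us j)) p)"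
      for h
    proof (cases "a h p = 0")
      case True
      then show ?thesis by simp
    next
      case False
      have ah: "a h \<in> Lc B2 (I2 h)" using a unfolding skew_def by blast
      have pf: "prime_filter B2 p" and ne: "p \<inter> I2 h \<noteq> {}"
        using Lc_supp_I[where I=I2 and g=h, OF ah False] by auto
      let ?q = "pull B2 I2 \<phi>2 h p"
      have "a h p * alpha B2 I2 \<phi>2 h (f x (- h + k)) p = a h p * f x (- h + k) ?q"
        using pf ne by (simp add: alpha_in)
      also have "\<dots> = (\<Sum>j<n. a h p * (x j (- h + (k + gs j)) ?q * alpha B2 I2 \<phi>2 (k + gs j) (ind B2 (Us j)) p))"
        unfolding f_def sum_distrib_left
      proof (intro sum.cong refl)
        fix j assume j: "j \<in> {..<n}"
        let ?m = "- h + (k + gs j)"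
        have mm: "- h + k + gs j = ?m" by (simp add: add.assoc)
        show "a h p * (x j (- h + k + gs j) ?q * alpha B2 I2 \<phi>2 (- h + k + gs j) (ind B2 (Us j)) ?q) =
          a h p * (x j ?m ?q * alpha B2 I2 \<phi>2 (k + gs j) (ind B2 (Us j)) p)"
        proof (cases "x j ?m ?q = 0")
          case True
          then show ?thesis using mm by simp
        next
          case False
          have xm: "x j ?m \<in> Lc B2 (I2 ?m)" using xsk[OF x] j unfolding skew_def by blast
          have ne2: "?q \<inter> I2 ?m \<noteq> {}" using Lc_supp_I[where I=I2 and g="?m" and f="x j ?m", OF xm False] by blast
          have "alpha B2 I2 \<phi>2 ?m (ind B2 (Us j)) ?q = (alpha B2 I2 \<phi>2 (h + ?m) (ind B2 (Us j)) p :: 'r)"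
            using AC[OF pa pf ne ne2] .
          also have "h + ?m = k + gs j" by (simp add: add.assoc[symmetric])
          finally show ?thesis using mm by simp
        qed
      qed
      also have "\<dots> = (\<Sum>j<n. a h p * alpha B2 I2 \<phi>2 h (x j (- h + (k + gs j))) p * alpha B2 I2 \<phi>2 (k + gs j) (ind B2 (Us j)) p)"
        using pf ne by (simp add: alpha_in mult.assoc)
      finally show ?thesis .
    qed
    have "f (\<lambda>i. skew_mult B2 I2 \<phi>2 a (x i)) k p =
        (\<Sum>j<n. \<Sum>h\<in>?S. a h p * alpha B2 I2 \<phi>2 h (x j (- h + (k + gs j))) p * alpha B2 I2 \<phi>2 (k + gs j) (ind B2 (Us j)) p)"
      unfolding f_def SC[OF pa a] sum_distrib_right by simp
    also have "\<dots> = (\<Sum>h\<in>?S. \<Sum>j<n. a h p * alpha B2 I2 \<phi>2 h (x j (- h + (k + gs j))) p * alpha B2 I2 \<phi>2 (k + gs j) (ind B2 (Us j)) p)"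
      by (rule sum.swap)
    also have "\<dots> = (\<Sum>h\<in>?S. a h p * alpha B2 I2 \<phi>2 h (f x (- h + k)) p)"
      using termh by simp
    also have "\<dots> = skew_mult B2 I2 \<phi>2 a (f x) k p" unfolding SC[OF pa a] ..
    finally show "f (\<lambda>i. skew_mult B2 I2 \<phi>2 a (x i)) k p = skew_mult B2 I2 \<phi>2 a (f x) k p" .
  qed
  have fsurj: "N \<subseteq> f ` D"
  proof
    fix y assume "y \<in> N"
    then obtain b where b: "b \<in> skew B2 I2 \<phi>2" "y = skew_mult B2 I2 \<phi>2 b (delta B2 U 0)"
      unfolding N_def left_ideal_def by blast
    define a where "a j = (\<lambda>m p. b (m + - gs j) p * alpha B2 I2 \<phi>2 (m + - gs j) (ind B2 (Ws j)) p)" for j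
    define x where "x = (\<lambda>j. if j < n then skew_mult B2 I2 \<phi>2 (a j) (delta B2 (Us j) 0) else 0)"
    have ask: "a j \<in> skew B2 I2 \<phi>2" if j: "j < n" for j
    proof -
      have "{m. a j m \<noteq> 0} \<subseteq> (\<lambda>k. k + gs j) ` {k. b k \<noteq> 0}"
      proof
        fix m assume "m \<in> {m. a j m \<noteq> 0}"
        then have "b (m + - gs j) \<noteq> 0" unfolding a_def by (auto simp: zero_fun_def)
        moreover have "m = (m + - gs j) + gs j" by (simp add: add.assoc)
        ultimately show "m \<in> (\<lambda>k. k + gs j) ` {k. b k \<noteq> 0}" by blast
      qed
      then have fin: "finite {m. a j m \<noteq> 0}"
        using b(1) unfolding skew_def by (auto intro: finite_subset)
      have "a j m \<in> Lc B2 (I2 m)" for m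
        unfolding a_def
      proof (rule Lc_mult[where E="\<lambda>A. \<phi>2 (m + - gs j) (inf (\<phi>2 (- (m + - gs j)) A) (Ws j))"])
        let ?k = "m + - gs j"
        show "b ?k \<in> Lc B2 (I2 ?k)" using b(1) unfolding skew_def by blast
        show "ind B2 A p * alpha B2 I2 \<phi>2 ?k (ind B2 (Ws j)) p = ind B2 (\<phi>2 ?k (inf (\<phi>2 (- ?k) A) (Ws j))) p"
          if "A \<in> I2 ?k" for A p using PF[OF pa that WjB[OF j]] .
        show "\<phi>2 ?k (inf (\<phi>2 (- ?k) A) (Ws j)) \<in> I2 m" if A: "A \<in> I2 ?k" for A
        proof -
          have "inf (\<phi>2 (- ?k) A) (Ws j) \<in> I2 (- ?k) \<inter> I2 (gs j)"
            using I_inf[OF pa phi_mem'[OF pa A] WjB[OF j]] I_inf2[OF pa Wj(1)[OF j] I_sub[OF pa phi_mem'[OF pa A]]] by blast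
          then have "\<phi>2 ?k (inf (\<phi>2 (- ?k) A) (Ws j)) \<in> \<phi>2 ?k ` (I2 (- ?k) \<inter> I2 (gs j))" by (rule imageI)
          also have "\<dots> = I2 ?k \<inter> I2 (?k + gs j)" by (rule pa_img[OF pa])
          also have "?k + gs j = m" by (simp add: add.assoc)
          finally show ?thesis by blast
        qed
      qed
      then show ?thesis unfolding skew_def using fin by blast
    qed
    have xD: "x \<in> D"
    proof -
      have "{i. x i \<noteq> 0} \<subseteq> {..<n}" unfolding x_def by auto
      then have "finite {i. x i \<noteq> 0}" by (rule finite_subset) simp
      moreover have "\<forall>i\<in>{..<n}. x i \<in> left_ideal B2 I2 \<phi>2 (delta B2 (Us i) 0)"
        unfolding x_def using LI_intro[OF pa ask] by simp
      moreover have "\<forall>i. i \<notin> {..<n} \<longrightarrow> x i = 0" unfolding x_def by simp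
      ultimately show ?thesis unfolding D_def dsum_def by blast
    qed
    have "f x = y"
    proof (intro ext)
      fix k p
      have yk: "y k p = b k p * alpha B2 I2 \<phi>2 k (ind B2 U) p" unfolding b(2) using LD[OF pa b(1)] .
      have xk: "x j (k + gs j) p = b k p * alpha B2 I2 \<phi>2 k (ind B2 (Ws j)) p * alpha B2 I2 \<phi>2 (k + gs j) (ind B2 (Us j)) p"
        if j: "j < n" for j
      proof -
        have "k + gs j + - gs j = k" by (simp add: add.assoc)
        then show ?thesis unfolding x_def using j LD[OF pa ask[OF j]] by (simp add: a_def)
      qed
      show "f x k p = y k p"
      proof (cases "prime_filter B2 p \<and> p \<inter> I2 k \<noteq> {}")
        case False
        have "b k \<in> Lc B2 (I2 k)" using b(1) unfolding skew_def by blast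
        then have "b k p = 0" using Lc_supp_I[where I=I2 and g=k] False by blast
        then show ?thesis unfolding f_def yk using xk by simp
      next
        case True
        let ?q = "pull B2 I2 \<phi>2 k p"
        have qpf: "prime_filter B2 ?q" using pull_pf'(1)[OF pa] True by blast
        have "f x k p = (\<Sum>j<n. b k p * (if Ws j \<in> ?q then 1 else 0))"
          unfolding f_def
        proof (intro sum.cong refl)
          fix j assume "j \<in> {..<n}"
          then have j: "j < n" by simp
          show "x j (k + gs j) p * alpha B2 I2 \<phi>2 (k + gs j) (ind B2 (Us j)) p = b k p * (if Ws j \<in> ?q then 1 else 0)"
            unfolding xk[OF j] Kj[OF j] using True by (simp add: alpha_ind[OF pa])
        qed
        also have "\<dots> = b k p * (\<Sum>j<length qs. if snd (qs ! j) \<in> ?q then 1 else 0)"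
          unfolding sum_distrib_left n_def Ws_def ..
        also have "\<dots> = b k p * (if U \<in> ?q then 1 else 0)"
          using dj_sum[where 'r='r, OF qs(1) qpf pa_gba[OF pa]] by simp
        also have "\<dots> = y k p" using True by (simp add: yk alpha_ind[OF pa])
        finally show ?thesis .
      qed
    qed
    then show "y \<in> f ` D" using xD by blast
  qed
  show "\<exists>(J :: nat set) (Us :: nat \<Rightarrow> 'b)
           (f :: (nat \<Rightarrow> ('g \<Rightarrow> 'b set \<Rightarrow> 'r::comm_ring_1)) \<Rightarrow> ('g \<Rightarrow> 'b set \<Rightarrow> 'r)).
           (\<forall>i\<in>J. Us i \<in> B1) \<and>
           skew_module_hom B2 I2 \<phi>2
             (dsum J (\<lambda>i. left_ideal B2 I2 \<phi>2 (delta B2 (Us i) 0)))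
             (left_ideal B2 I2 \<phi>2 (delta B2 U 0)) f \<and>
           f ` dsum J (\<lambda>i. left_ideal B2 I2 \<phi>2 (delta B2 (Us i) 0))
             = left_ideal B2 I2 \<phi>2 (delta B2 U 0)"
  proof (intro exI conjI)
    show "\<forall>i\<in>{..<n}. Us i \<in> B1" using Wj(3) by simp
    show "skew_module_hom B2 I2 \<phi>2 (dsum {..<n} (\<lambda>i. left_ideal B2 I2 \<phi>2 (delta B2 (Us i) 0)))
      (left_ideal B2 I2 \<phi>2 (delta B2 U 0)) f"
      unfolding skew_module_hom_def using fN fadd flin unfolding D_def N_def by blast
    show "f ` dsum {..<n} (\<lambda>i. left_ideal B2 I2 \<phi>2 (delta B2 (Us i) 0)) = left_ideal B2 I2 \<phi>2 (delta B2 U 0)"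
      using fN fsurj unfolding D_def N_def by blast
  qed
qed

end
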